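(* Let $\mathbb X,\mathbb H,\mathbb Y$ be separable real Hilbert spaces, $\mathbf W\colon\mathbb X\to\mathbb H$ and $\mathbf A\colon\mathbb H\to\mathbb Y$ bounded linear operators, $\mathcal R\colon\mathbb X\to[0,\infty]$ proper, convex and weakly lower semicontinuous, $(\phi_\lambda)_{\lambda\in\Lambda}$ an orthonormal basis of $\mathbb H$ indexed by a countable set $\Lambda$, and $(\kappa_\lambda)_{\lambda\in\Lambda}$ weights with $\kappa_\lambda\ge a$ for all $\lambda$, for some $a>0$. Assume there is $x\in\mathbb X$ with $\mathcal R(x)+\|\mathbf W x\|_{1,\kappa}<\infty$. Suppose $(x_\star,h_\star,y_\star)\in\mathbb X\times\mathbb H\times\mathbb Y$ satisfies the following: (1.1) $\mathbf W x_\star=h_\star$ and $\mathbf A h_\star=y_\star$; (1.2) there is $u\in\mathbb H$ with $\mathbf W^*u\in\partial\mathcal R(x_\star)$; (1.3) there is $v\in\mathbb Y$ with $\eta:=\mathbf A^*v-u\in\partial\|\cdot\|_{1,\kappa}(h_\star)$; (1.4) the restriction $\mathbf A_{\Omega[\eta]}\colon\mathbb H_{\Omega[\eta]}\to\mathbb Y$ is injective. Let $C>0$. Then for every $\delta>0$, every $y^\delta\in\mathbb Y$ with $\|y^\delta-y_\star\|\le\delta$, $\alpha=C\delta$, and every minimizer $(x_\alpha^\delta,h_\alpha^\delta)$ of $$\mathcal B_{\alpha,y^\delta}(x,h)=\tfrac12\|\mathbf W x-h\|^2+\tfrac12\|\mathbf A h-y^\delta\|^2+\alpha\big(\mathcal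 R(x)+\|h\|_{1,\kappa}\big)$$ over $\mathbb X\times\mathbb H$, we have $$\mathcal D^{\mathcal R}_{\mathbf W^*u}(x_\alpha^\delta,x_\star)\le c_{(u,v)}\,\delta,\qquad \|h_\alpha^\delta-h_\star\|\le d_{(u,v)}\,\delta,$$ where $\|(u,v)\|=(\|u\|^2+\|v\|^2)^{1/2}$, $$c_{(u,v)}=\frac{(1+C\|(u,v)\|)^2}{2C},\qquad d_{(u,v)}=2\|\mathbf A_{\Omega[\eta]}^{-1}\|\,(1+C\|(u,v)\|)+\frac{1+\|\mathbf A_{\Omega[\eta]}^{-1}\|\,\|\mathbf A\|}{m[\eta]}\,c_{(u,v)}.$$
   Context: Weighted $\ell^1$ norm: $\|h\|_{1,\kappa}=\sum_{\lambda\in\Lambda}\kappa_\lambda|\langle\phi_\lambda,h\rangle|\in[0,\infty]$ for $h\in\mathbb H$. Subdifferential: $\xi\in\partial\mathcal F(z_\star)$ iff $\mathcal F(z)\ge\mathcal F(z_\star)+\langle\xi,z-z_\star\rangle$ for all $z$. Bregman distance: for $\xi\in\partial\mathcal F(z_\star)$, $\mathcal D^{\mathcal F}_\xi(z,z_\star)=\mathcal F(z)-\mathcal F(z_\star)-\langle\xi,z-z_\star\rangle$. For $\eta=\sum_\lambda\eta_\lambda\phi_\lambda\in\partial\|\cdot\|_{1,\kappa}(h_\star)$ (which forces $|\eta_\lambda|\le\kappa_\lambda$ for all $\lambda$), set $\Omega[\eta]=\{\lambda\in\Lambda: |\eta_\lambda|=\kappa_\lambda\}$ (a finite set) and $m[\eta]=\min\{\kappa_\lambda-|\eta_\lambda|:\lambda\notin\Omega[\eta]\}>0$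 (with the term involving $1/m[\eta]$ read as $0$ if $\Lambda=\Omega[\eta]$). For finite $\Omega\subseteq\Lambda$: $\mathbb H_\Omega=\operatorname{span}\{\phi_\lambda:\lambda\in\Omega\}$, $\mathbf A_\Omega=\mathbf A|_{\mathbb H_\Omega}\colon\mathbb H_\Omega\to\mathbb Y$, and when $\mathbf A_\Omega$ is injective, $\|\mathbf A_\Omega^{-1}\|$ is the operator norm of its inverse $\operatorname{ran}(\mathbf A_\Omega)\to\mathbb H_\Omega$. *)

theory Defs
  imports "HOL-Analysis.Analysis"
begin

definition weakly_conv :: "(nat \<Rightarrow> 'a::real_inner) \<Rightarrow> 'a \<Rightarrow> bool" where
  "weakly_conv xs x \<longleftrightarrow> (\<forall>z. (\<lambda>n. inner (xs n) z) \<longlonglongrightarrow> inner x z)"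

definition proper_fun :: "('a \<Rightarrow> ennreal) \<Rightarrow> bool" where
  "proper_fun R \<longleftrightarrow> (\<exists>x. R x < \<infinity>)"

definition convex_fun :: "('a::real_vector \<Rightarrow> ennreal) \<Rightarrow> bool" where
  "convex_fun R \<longleftrightarrow> (\<forall>x y t. 0 \<le> t \<and> t \<le> 1 \<longrightarrow>
      R (t *\<^sub>R x + (1 - t) *\<^sub>R y) \<le> ennreal t * R x + ennreal (1 - t) * R y)"

definition weakly_lsc :: "('a::real_inner \<Rightarrow> ennreal) \<Rightarrow> bool" where
  "weakly_lsc R \<longleftrightarrow> (\<forall>xs x. weakly_conv xs x \<longrightarrow> R x \<le> liminf (\<lambda>n. R (xs n)))"

definition orthonormal_basis :: "'l set \<Rightarrow> ('l \<Rightarrow> 'a::real_inner) \<Rightarrow> bool" where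
  "orthonormal_basis \<Lambda> \<phi> \<longleftrightarrow>
     (\<forall>i\<in>\<Lambda>. \<forall>j\<in>\<Lambda>. inner (\<phi> i) (\<phi> j) = (if i = j then 1 else 0)) \<and>
     (\<forall>h. (\<forall>i\<in>\<Lambda>. inner (\<phi> i) h = 0) \<longrightarrow> h = 0)"

definition wl1 :: "'l set \<Rightarrow> ('l \<Rightarrow> 'a::real_inner) \<Rightarrow> ('l \<Rightarrow> real) \<Rightarrow> 'a \<Rightarrow> ennreal" where
  "wl1 \<Lambda> \<phi> \<kappa> h = (\<Sum>\<^sub>\<infinity>l\<in>\<Lambda>. ennreal (\<kappa> l * \<bar>inner (\<phi> l) h\<bar>))"

definition subdiff :: "('a::real_inner \<Rightarrow> ereal) \<Rightarrow> 'a \<Rightarrow> 'a set" where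
  "subdiff F z0 = {\<xi>. \<forall>z. F z \<ge> F z0 + ereal (inner \<xi> (z - z0))}"

definition bregman :: "('a::real_inner \<Rightarrow> ereal) \<Rightarrow> 'a \<Rightarrow> 'a \<Rightarrow> 'a \<Rightarrow> ereal" where
  "bregman F \<xi> z z0 = F z - F z0 - ereal (inner \<xi> (z - z0))"

definition Omega :: "'l set \<Rightarrow> ('l \<Rightarrow> 'a::real_inner) \<Rightarrow> ('l \<Rightarrow> real) \<Rightarrow> 'a \<Rightarrow> 'l set" where
  "Omega \<Lambda> \<phi> \<kappa> \<eta> = {l\<in>\<Lambda>. \<bar>inner (\<phi> l) \<eta>\<bar> = \<kappa> l}"

definition mgap :: "'l set \<Rightarrow> ('l \<Rightarrow> 'a::real_inner) \<Rightarrow> ('l \<Rightarrow> real) \<Rightarrow> 'a \<Rightarrow> real" where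
  "mgap \<Lambda> \<phi> \<kappa> \<eta> = Inf ((\<lambda>l. \<kappa> l - \<bar>inner (\<phi> l) \<eta>\<bar>) ` (\<Lambda> - Omega \<Lambda> \<phi> \<kappa> \<eta>))"

definition HOmega :: "('l \<Rightarrow> 'a::real_inner) \<Rightarrow> 'l set \<Rightarrow> 'a set" where
  "HOmega \<phi> \<Omega> = span (\<phi> ` \<Omega>)"

text \<open>Operator norm of the inverse of A restricted to a subspace S (A injective on S),
  as a map ran(A|S) \<rightarrow> S: sup of norm h over h in S with norm (A h) \<le> 1.\<close>
definition inv_opnorm :: "('a::real_normed_vector \<Rightarrow> 'b::real_normed_vector) \<Rightarrow> 'a set \<Rightarrow> real" where
  "inv_opnorm A S = Sup {norm h | h. h \<in> S \<and> norm (A h) \<le> 1}"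

end

theory Submission
  imports Defs
begin

lemma riesz_min:
  fixes f :: "'a::{real_inner,complete_space} \<Rightarrow> real"
  assumes bl: "bounded_linear f" and ne: "f e = 1"
  shows "\<exists>z. f z = 1 \<and> (\<forall>y. f y = 1 \<longrightarrow> norm z \<le> norm y)"
proof -
  interpret f: bounded_linear f by fact
  define M where "M = {y. f y = 1}"
  define d where "d = Inf (norm ` M)"
  have Mne: "e \<in> M" using ne by (simp add: M_def)
  have bdd: "bdd_below (norm ` M)" by (rule bdd_belowI[of _ 0]) auto
  have dle: "d \<le> norm y" if "y \<in> M" for y
    unfolding d_def using bdd that by (simp add: cInf_lower)
  have d0: "d \<ge> 0" unfolding d_def using Mne by (auto intro!: cInf_greatest)
  have ex: "\<exists>x\<in>M. norm x < d + 1/(Suc n)" for n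
  proof -
    have "Inf (norm ` M) < d + 1/Suc n" unfolding d_def by simp
    then obtain t where "t \<in> norm ` M" "t < d + 1/Suc n"
      using cInf_lessD[of "norm ` M"] Mne by blast
    then show ?thesis by auto
  qed
  then obtain x where xM: "\<And>n. x n \<in> M" and xl: "\<And>n. norm (x n) < d + 1/Suc n"
    by metis
  define K where "K = 2*d+1"
  have K0: "K > 0" using d0 by (simp add: K_def)
  have xsq: "(norm (x n))\<^sup>2 \<le> d\<^sup>2 + K/Suc n" for n
  proof -
    define t where "t = 1/real (Suc n)"
    have t0: "0 \<le> t" "t \<le> 1" by (auto simp: t_def divide_le_eq)
    have a: "norm (x n) \<le> d + t" using xl[of n] by (simp add: t_def)
    have "(norm (x n))\<^sup>2 \<le> (d + t)\<^sup>2" using a by (simp add: power_mono)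
    also have "\<dots> = d\<^sup>2 + 2*d*t + t*t" by (simp add: power2_eq_square algebra_simps)
    also have "\<dots> \<le> d\<^sup>2 + 2*d*t + t" using t0 by (simp add: mult_left_le)
    also have "\<dots> = d\<^sup>2 + K/Suc n" by (simp add: K_def t_def algebra_simps add_divide_distrib)
    finally show ?thesis .
  qed
  have pd: "(norm (x n - x m))\<^sup>2 \<le> 2*K/Suc n + 2*K/Suc m" for n m
  proof -
    have mid: "(1/2) *\<^sub>R (x n + x m) \<in> M" using xM[of n] xM[of m]
      by (simp add: M_def f.scaleR f.add)
    have "2*d \<le> norm (x n + x m)" using dle[OF mid] by simp
    hence "(2*d)\<^sup>2 \<le> (norm (x n + x m))\<^sup>2" using d0 by (intro power_mono) auto
    moreover have "(norm (x n - x m))\<^sup>2 + (norm (x n + x m))\<^sup>2 = 2*(norm (x n))\<^sup>2 + 2*(norm (x m))\<^sup>2"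
      by (simp add: power2_norm_eq_inner inner_diff inner_add inner_commute)
    moreover have "(2*d)\<^sup>2 = 4*d\<^sup>2" by (simp add: power2_eq_square)
    ultimately show ?thesis using xsq[of n] xsq[of m] by linarith
  qed
  have C: "Cauchy x"
  proof (rule metric_CauchyI)
    fix e :: real assume e: "e > 0"
    obtain N where N: "4*K/e\<^sup>2 < real N" using reals_Archimedean2 by blast
    have "4*K < real N * e\<^sup>2" using N e by (simp add: field_simps)
    show "\<exists>N. \<forall>m\<ge>N. \<forall>n\<ge>N. dist (x m) (x n) < e"
    proof (intro exI allI impI)
      fix m n assume mn: "N \<le> m" "N \<le> n"
      have "2*K/Suc m \<le> 2*K/Suc N" using K0 mn by (simp add: frac_le)
      moreover have "2*K/Suc n \<le> 2*K/Suc N" using K0 mn by (simp add: frac_le)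
      ultimately have "(norm (x m - x n))\<^sup>2 \<le> 4*K/Suc N" using pd[of m n] by simp
      also have "\<dots> < e\<^sup>2"
      proof -
        have "real N * e\<^sup>2 \<le> real (Suc N) * e\<^sup>2" by (intro mult_right_mono) auto
        hence "4*K < real (Suc N) * e\<^sup>2" using \<open>4*K < real N * e\<^sup>2\<close> by linarith
        thus ?thesis by (simp add: divide_less_eq mult.commute)
      qed
      finally have "(norm (x m - x n))\<^sup>2 < e\<^sup>2" .
      hence "norm (x m - x n) < e" using e power2_less_imp_less[of "norm (x m - x n)" e] by linarith
      thus "dist (x m) (x n) < e" by (simp add: dist_norm)
    qed
  qed
  then obtain z where z: "x \<longlonglongrightarrow> z" using Cauchy_convergent_iff convergent_def by blast
  have "(\<lambda>n. f (x n)) \<longlonglongrightarrow> f z" using f.tendsto[OF z] .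
  moreover have "(\<lambda>n. f (x n)) = (\<lambda>n. 1)" using xM by (auto simp: M_def)
  ultimately have "(\<lambda>n. 1) \<longlonglongrightarrow> f z" by simp
  hence fz: "f z = 1" using LIMSEQ_unique[OF tendsto_const] by metis
  have nz: "(\<lambda>n. norm (x n)) \<longlonglongrightarrow> norm z" using tendsto_norm[OF z] .
  have "(\<lambda>n. d + 1/Suc n) \<longlonglongrightarrow> d + 0"
    by (intro tendsto_add tendsto_const) (rule LIMSEQ_Suc[OF lim_inverse_n'])
  hence "norm z \<le> d + 0" using nz xl by (intro LIMSEQ_le[OF nz]) (auto intro: less_imp_le)
  thus ?thesis using fz dle unfolding M_def by force
qed


lemma riesz:
  fixes f :: "'a::{real_inner,complete_space} \<Rightarrow> real"
  assumes bl: "bounded_linear f"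
  shows "\<exists>w. \<forall>x. f x = inner w x"
proof (cases "\<forall>x. f x = 0")
  case True thus ?thesis by (intro exI[of _ 0]) simp
next
  case False
  interpret f: bounded_linear f by fact
  obtain e0 where e0: "f e0 \<noteq> 0" using False by blast
  have "f (e0 /\<^sub>R f e0) = 1" using e0 by (simp add: f.scaleR)
  then obtain z where fz: "f z = 1" and zmin: "\<And>y. f y = 1 \<Longrightarrow> norm z \<le> norm y"
    using riesz_min[OF bl] by blast
  have orth: "inner z y = 0" if fy: "f y = 0" for y
  proof (cases "y = 0")
    case True thus ?thesis by simp
  next
    case False
    define ss where "ss = inner y y"
    define cc where "cc = inner z y"
    have s0: "ss > 0" using False by (simp add: ss_def)
    define tt where "tt = - cc / ss"
    have "f (z + tt *\<^sub>R y) = 1" using fz fy by (simp add: f.add f.scaleR)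
    hence "norm z \<le> norm (z + tt *\<^sub>R y)" by (rule zmin)
    hence "(norm z)\<^sup>2 \<le> (norm (z + tt *\<^sub>R y))\<^sup>2" by (intro power_mono) auto
    hence "z \<bullet> z \<le> z \<bullet> z + 2*tt*cc + tt*tt * ss"
      by (simp add: power2_norm_eq_inner inner_add inner_commute cc_def ss_def algebra_simps)
    hence "0 \<le> 2*tt*cc + tt*tt * ss" by simp
    also have "2*tt*cc + tt*tt * ss = - cc*cc/ss" using s0 by (simp add: tt_def field_simps power2_eq_square)
    finally have "cc*cc/ss \<le> 0" by simp
    hence "cc*cc \<le> 0" using s0 by (simp add: divide_le_0_iff)
    thus ?thesis unfolding cc_def by (simp add: mult_le_0_iff) (metis linorder_not_le mult_neg_neg mult_pos_pos less_eq_real_def)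
  qed
  have z0: "inner z z \<noteq> 0" using fz by auto
  show ?thesis
  proof (intro exI allI)
    fix x
    have "f (x - f x *\<^sub>R z) = 0" using fz by (simp add: f.diff f.scaleR)
    hence "inner z (x - f x *\<^sub>R z) = 0" by (rule orth)
    hence "inner z x = f x * inner z z" by (simp add: inner_diff_right)
    thus "f x = inner (z /\<^sub>R inner z z) x" using z0 by simp
  qed
qed

lemma adjoint_hilbert:
  fixes T :: "'a::{real_inner,complete_space} \<Rightarrow> 'b::real_inner"
  assumes bl: "bounded_linear T"
  shows "inner (T x) y = inner x (adjoint T y)"
proof -
  have "\<forall>y. \<exists>w. \<forall>x. inner (T x) y = inner x w"
  proof
    fix y
    have "bounded_linear (\<lambda>x. inner (T x) y)"
      by (rule bounded_linear_compose[OF bounded_linear_inner_left bl])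
    then obtain w where "\<forall>x. inner (T x) y = inner w x" using riesz by blast
    thus "\<exists>w. \<forall>x. inner (T x) y = inner x w" by (auto simp: inner_commute)
  qed
  hence "\<exists>g. \<forall>x y. inner (T x) y = inner x (g y)" by metis
  hence "\<forall>x y. inner (T x) y = inner x (adjoint T y)"
    unfolding adjoint_def by (rule someI_ex)
  thus ?thesis by blast
qed

lemma onb_inner: "orthonormal_basis \<Lambda> \<phi> \<Longrightarrow> i \<in> \<Lambda> \<Longrightarrow> j \<in> \<Lambda> \<Longrightarrow>
   inner (\<phi> i) (\<phi> j) = (if i = j then 1 else 0)"
  unfolding orthonormal_basis_def by blast

lemma finsum_coeff:
  assumes onb: "orthonormal_basis \<Lambda> \<phi>" and F: "finite F" "F \<subseteq> \<Lambda>" and l: "l \<in> \<Lambda>"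
  shows "inner (\<phi> l) (\<Sum>k\<in>F. c k *\<^sub>R \<phi> k) = (if l \<in> F then c l else 0)"
proof -
  have "inner (\<phi> l) (\<Sum>k\<in>F. c k *\<^sub>R \<phi> k) = (\<Sum>k\<in>F. c k * inner (\<phi> l) (\<phi> k))"
    by (simp add: inner_sum_right)
  also have "\<dots> = (\<Sum>k\<in>F. if l = k then c k else 0)"
    using F l onb_inner[OF onb] by (intro sum.cong) auto
  also have "\<dots> = (if l \<in> F then c l else 0)" using F by simp
  finally show ?thesis .
qed

lemma finsum_norm2:
  assumes onb: "orthonormal_basis \<Lambda> \<phi>" and F: "finite F" "F \<subseteq> \<Lambda>"
  shows "inner (\<Sum>k\<in>F. c k *\<^sub>R \<phi> k) (\<Sum>k\<in>F. c k *\<^sub>R \<phi> k) = (\<Sum>k\<in>F. (c k)\<^sup>2)"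
proof -
  have "inner (\<Sum>k\<in>F. c k *\<^sub>R \<phi> k) (\<Sum>k\<in>F. c k *\<^sub>R \<phi> k)
        = (\<Sum>l\<in>F. c l * inner (\<phi> l) (\<Sum>k\<in>F. c k *\<^sub>R \<phi> k))"
    by (simp add: inner_sum_left)
  also have "\<dots> = (\<Sum>l\<in>F. (c l)\<^sup>2)"
    using F finsum_coeff[OF onb F] by (intro sum.cong) (auto simp: power2_eq_square)
  finally show ?thesis .
qed

lemma bessel_fin:
  assumes onb: "orthonormal_basis \<Lambda> \<phi>" and F: "finite F" "F \<subseteq> \<Lambda>"
  shows "(\<Sum>l\<in>F. (inner (\<phi> l) \<eta>)\<^sup>2) \<le> (norm \<eta>)\<^sup>2"
proof -
  define c where "c l = inner (\<phi> l) \<eta>" for l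
  define g where "g = (\<Sum>k\<in>F. c k *\<^sub>R \<phi> k)"
  have gg: "inner g g = (\<Sum>k\<in>F. (c k)\<^sup>2)" unfolding g_def by (rule finsum_norm2[OF onb F])
  have eg: "inner \<eta> g = (\<Sum>k\<in>F. (c k)\<^sup>2)"
    unfolding g_def by (simp add: inner_sum_right c_def inner_commute power2_eq_square)
  have "0 \<le> inner (\<eta> - g) (\<eta> - g)" by simp
  also have "\<dots> = inner \<eta> \<eta> - 2 * inner \<eta> g + inner g g"
    by (simp add: inner_diff inner_commute)
  finally show ?thesis using gg eg by (simp add: c_def power2_norm_eq_inner)
qed

lemma coeff_big_finite:
  assumes onb: "orthonormal_basis \<Lambda> \<phi>" and b: "b > 0"
  shows "finite {l\<in>\<Lambda>. b \<le> \<bar>inner (\<phi> l) \<eta>\<bar>}"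
proof (rule ccontr)
  assume inf: "infinite {l\<in>\<Lambda>. b \<le> \<bar>inner (\<phi> l) \<eta>\<bar>}"
  obtain n :: nat where n: "(norm \<eta>)\<^sup>2 / b\<^sup>2 < n" using reals_Archimedean2 by blast
  obtain F where F: "F \<subseteq> {l\<in>\<Lambda>. b \<le> \<bar>inner (\<phi> l) \<eta>\<bar>}" "finite F" "card F = n"
    using infinite_arbitrarily_large[OF inf] by blast
  have "(\<Sum>l\<in>F. b\<^sup>2) \<le> (\<Sum>l\<in>F. (inner (\<phi> l) \<eta>)\<^sup>2)"
  proof (rule sum_mono)
    fix l assume "l \<in> F"
    hence "b \<le> \<bar>inner (\<phi> l) \<eta>\<bar>" using F by auto
    hence "b\<^sup>2 \<le> \<bar>inner (\<phi> l) \<eta>\<bar>\<^sup>2" using b by (intro power_mono) auto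
    thus "b\<^sup>2 \<le> (inner (\<phi> l) \<eta>)\<^sup>2" by simp
  qed
  also have "\<dots> \<le> (norm \<eta>)\<^sup>2" using F by (intro bessel_fin[OF onb]) auto
  finally have "n * b\<^sup>2 \<le> (norm \<eta>)\<^sup>2" using F by simp
  moreover have "(norm \<eta>)\<^sup>2 < n * b\<^sup>2" using n b by (simp add: divide_less_eq)
  ultimately show False by simp
qed

lemma Omega_finite:
  assumes onb: "orthonormal_basis \<Lambda> \<phi>" and a: "a > 0" "\<forall>l\<in>\<Lambda>. \<kappa> l \<ge> a"
  shows "finite (Omega \<Lambda> \<phi> \<kappa> \<eta>)"
  by (rule finite_subset[OF _ coeff_big_finite[OF onb a(1), of \<eta>]])
     (use a in \<open>auto simp: Omega_def\<close>)

lemma mgap_pos: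
  assumes onb: "orthonormal_basis \<Lambda> \<phi>" and a: "a > 0" "\<forall>l\<in>\<Lambda>. \<kappa> l \<ge> a"
    and le: "\<forall>l\<in>\<Lambda>. \<bar>inner (\<phi> l) \<eta>\<bar> \<le> \<kappa> l"
    and ne: "\<Lambda> - Omega \<Lambda> \<phi> \<kappa> \<eta> \<noteq> {}"
  shows "mgap \<Lambda> \<phi> \<kappa> \<eta> > 0"
proof -
  define G where "G = {l\<in>\<Lambda> - Omega \<Lambda> \<phi> \<kappa> \<eta>. a/2 \<le> \<bar>inner (\<phi> l) \<eta>\<bar>}"
  have Gf: "finite G"
    by (rule finite_subset[OF _ coeff_big_finite[OF onb, of "a/2" \<eta>]]) (use a in \<open>auto simp: G_def\<close>)
  define b where "b = min (a/2) (if G = {} then a/2 else Min ((\<lambda>l. \<kappa> l - \<bar>inner (\<phi> l) \<eta>\<bar>) ` G))"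
  have pos: "\<kappa> l - \<bar>inner (\<phi> l) \<eta>\<bar> > 0" if "l \<in> \<Lambda> - Omega \<Lambda> \<phi> \<kappa> \<eta>" for l
    using that le by (force simp: Omega_def)
  have b0: "b > 0"
    using a Gf pos by (auto simp: b_def G_def)
  have lb: "b \<le> \<kappa> l - \<bar>inner (\<phi> l) \<eta>\<bar>" if l: "l \<in> \<Lambda> - Omega \<Lambda> \<phi> \<kappa> \<eta>" for l
  proof (cases "l \<in> G")
    case True
    hence "Min ((\<lambda>l. \<kappa> l - \<bar>inner (\<phi> l) \<eta>\<bar>) ` G) \<le> \<kappa> l - \<bar>inner (\<phi> l) \<eta>\<bar>"
      using Gf by (intro Min_le) auto
    thus ?thesis using True by (auto simp: b_def)
  next
    case False
    hence "\<bar>inner (\<phi> l) \<eta>\<bar> < a/2" using l by (auto simp: G_def)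
    moreover have "\<kappa> l \<ge> a" using a l by auto
    ultimately show ?thesis by (simp add: b_def)
  qed
  have "b \<le> mgap \<Lambda> \<phi> \<kappa> \<eta>" unfolding mgap_def
    using ne lb by (intro cInf_greatest) auto
  thus ?thesis using b0 by simp
qed

lemma mgap_le:
  assumes le: "\<forall>l\<in>\<Lambda>. \<bar>inner (\<phi> l) \<eta>\<bar> \<le> \<kappa> l" and l: "l \<in> \<Lambda> - Omega \<Lambda> \<phi> \<kappa> \<eta>"
  shows "mgap \<Lambda> \<phi> \<kappa> \<eta> \<le> \<kappa> l - \<bar>inner (\<phi> l) \<eta>\<bar>"
  unfolding mgap_def using le l
  by (intro cInf_lower bdd_belowI[of _ 0]) auto

lemma abs_summable_summable':
  fixes f :: \<open>'a \<Rightarrow> 'b :: {real_normed_vector,complete_space}\<close>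
  assumes \<open>(\<lambda>x. norm (f x)) summable_on A\<close>
  shows \<open>f summable_on A\<close>
proof -
  from assms obtain L where lim: \<open>(sum (\<lambda>x. norm (f x)) \<longlongrightarrow> L) (finite_subsets_at_top A)\<close>
    unfolding has_sum_def summable_on_def by blast
  then have *: \<open>cauchy_filter (filtermap (sum (\<lambda>x. norm (f x))) (finite_subsets_at_top A))\<close>
    by (auto intro!: nhds_imp_cauchy_filter simp: filterlim_def)
  have \<open>\<exists>P. eventually P (finite_subsets_at_top A) \<and>
              (\<forall>F F'. P F \<and> P F' \<longrightarrow> dist (sum f F) (sum f F') < e)\<close> if \<open>e>0\<close> for e
  proof -
    define d P where \<open>d = e/4\<close> and \<open>P F \<longleftrightarrow> finite F \<and> F \<subseteq> A \<and> dist (sum (\<lambda>x. norm (f x)) F) L < d\<close> for F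
    then have \<open>d > 0\<close>
      by (simp add: d_def that)
    have ev_P: \<open>eventually P (finite_subsets_at_top A)\<close>
      using lim
      by (auto simp add: P_def[abs_def] \<open>0 < d\<close> eventually_conj_iff eventually_finite_subsets_at_top_weakI tendsto_iff)
    
    moreover have \<open>dist (sum f F1) (sum f F2) < e\<close> if \<open>P F1\<close> and \<open>P F2\<close> for F1 F2
    proof -
      from ev_P
      obtain F' where \<open>finite F'\<close> and \<open>F' \<subseteq> A\<close> and P_sup_F': \<open>finite F \<and> F \<supseteq> F' \<and> F \<subseteq> A \<Longrightarrow> P F\<close> for F
        by atomize_elim (simp add: eventually_finite_subsets_at_top)
      define F where \<open>F = F' \<union> F1 \<union> F2\<close>
      have \<open>finite F\<close> and \<open>F \<subseteq> A\<close>
        using F_def P_def[abs_def] that \<open>finite F'\<close> \<open>F' \<subseteq> A\<close> by auto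
      have dist_F: \<open>dist (sum (\<lambda>x. norm (f x)) F) L < d\<close>
        by (metis F_def \<open>F \<subseteq> A\<close> P_def P_sup_F' \<open>finite F\<close> le_supE order_refl)

      have dist_F_subset: \<open>dist (sum f F) (sum f F') < 2*d\<close> if F': \<open>F' \<subseteq> F\<close> \<open>P F'\<close> for F'
      proof -
        have \<open>dist (sum f F) (sum f F') = norm (sum f (F-F'))\<close>
          unfolding dist_norm using \<open>finite F\<close> F' by (subst sum_diff) auto
        also have \<open>\<dots> \<le> norm (\<Sum>x\<in>F-F'. norm (f x))\<close>
          by (rule order.trans[OF sum_norm_le[OF order.refl]]) auto
        also have \<open>\<dots> = dist (\<Sum>x\<in>F. norm (f x)) (\<Sum>x\<in>F'. norm (f x))\<close>
          unfolding dist_norm using \<open>finite F\<close> F' by (subst sum_diff) auto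
        also have \<open>\<dots> < 2 * d\<close>
          using dist_F F' unfolding P_def dist_norm real_norm_def by linarith
        finally show \<open>dist (sum f F) (sum f F') < 2*d\<close> .
      qed

      have \<open>dist (sum f F1) (sum f F2) \<le> dist (sum f F) (sum f F1) + dist (sum f F) (sum f F2)\<close>
        by (rule dist_triangle3)
      also have \<open>\<dots> < 2 * d + 2 * d\<close>
        by (intro add_strict_mono dist_F_subset that) (auto simp: F_def)
      also have \<open>\<dots> \<le> e\<close>
        by (auto simp: d_def)
      finally show \<open>dist (sum f F1) (sum f F2) < e\<close> .
    qed
    then show ?thesis
      using ev_P by blast
  qed
  then have \<open>cauchy_filter (filtermap (sum f) (finite_subsets_at_top A))\<close>
    by (simp add: cauchy_filter_metric_filtermap)
  moreover have "complete (UNIV::'b set)"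
    by (meson Cauchy_convergent UNIV_I complete_def convergent_def)
  ultimately obtain L' where \<open>(sum f \<longlongrightarrow> L') (finite_subsets_at_top A)\<close>
    using complete_uniform[where S=UNIV] by (force simp add: filterlim_def)
  then show ?thesis
    using summable_on_def has_sum_def by blast
qed

lemma onb_norm: "orthonormal_basis \<Lambda> \<phi> \<Longrightarrow> l \<in> \<Lambda> \<Longrightarrow> norm (\<phi> l) = 1"
  unfolding orthonormal_basis_def by (metis norm_eq_sqrt_inner real_sqrt_one)

lemma onb_expansion:
  fixes h :: "'a::{real_inner,complete_space}"
  assumes onb: "orthonormal_basis \<Lambda> \<phi>"
    and abs: "(\<lambda>l. \<bar>inner (\<phi> l) h\<bar>) summable_on \<Lambda>"
  shows "((\<lambda>l. inner (\<phi> l) h *\<^sub>R \<phi> l) has_sum h) \<Lambda>"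
proof -
  define g where "g = (\<lambda>l. inner (\<phi> l) h *\<^sub>R \<phi> l)"
  have ng: "norm (g l) = norm (inner (\<phi> l) h)" if "l \<in> \<Lambda>" for l
    using onb_norm[OF onb that] by (simp add: g_def)
  have "(\<lambda>l. norm (g l)) summable_on \<Lambda>"
    using abs by (subst summable_on_cong[OF ng]) auto
  hence gs: "g summable_on \<Lambda>" by (rule abs_summable_summable')
  define S where "S = infsum g \<Lambda>"
  have hs: "(g has_sum S) \<Lambda>" using gs by (simp add: S_def)
  have "inner (\<phi> j) (h - S) = 0" if j: "j \<in> \<Lambda>" for j
  proof -
    have "((\<lambda>l. inner (\<phi> j) (g l)) has_sum inner (\<phi> j) S) \<Lambda>"
      by (rule has_sum_bounded_linear[OF bounded_linear_inner_right hs])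
    moreover have "((\<lambda>l. inner (\<phi> j) (g l)) has_sum inner (\<phi> j) h) \<Lambda>"
    proof (rule has_sum_finite_neutralI[where B="{j}"])
      show "\<And>x. x \<in> \<Lambda> - {j} \<Longrightarrow> inner (\<phi> j) (g x) = 0"
        using onb_inner[OF onb j] by (auto simp: g_def)
      show "inner (\<phi> j) h = (\<Sum>x\<in>{j}. inner (\<phi> j) (g x))"
        using onb_inner[OF onb j j] by (simp add: g_def)
    qed (use j in auto)
    ultimately have "inner (\<phi> j) S = inner (\<phi> j) h" using has_sum_unique by blast
    thus ?thesis by (simp add: inner_diff_right)
  qed
  hence "h - S = 0" using onb unfolding orthonormal_basis_def by blast
  thus ?thesis using hs by (simp add: g_def)
qed

lemma onb_norm_le:
  fixes h :: "'a::{real_inner,complete_space}"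
  assumes onb: "orthonormal_basis \<Lambda> \<phi>"
    and abs: "(\<lambda>l. \<bar>inner (\<phi> l) h\<bar>) summable_on \<Lambda>"
  shows "norm h \<le> infsum (\<lambda>l. \<bar>inner (\<phi> l) h\<bar>) \<Lambda>"
proof -
  have "norm h \<le> infsum (\<lambda>l. \<bar>inner (\<phi> l) h\<bar>) \<Lambda>"
  proof (rule norm_infsum_le[OF onb_expansion[OF onb abs]])
    show "((\<lambda>l. \<bar>inner (\<phi> l) h\<bar>) has_sum infsum (\<lambda>l. \<bar>inner (\<phi> l) h\<bar>) \<Lambda>) \<Lambda>"
      using abs by simp
    show "\<And>x. x \<in> \<Lambda> \<Longrightarrow> norm (inner (\<phi> x) h *\<^sub>R \<phi> x) \<le> \<bar>inner (\<phi> x) h\<bar>"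
      using onb_norm[OF onb] by simp
  qed
  thus ?thesis .
qed

lemma onb_inner_expansion:
  fixes h :: "'a::{real_inner,complete_space}"
  assumes onb: "orthonormal_basis \<Lambda> \<phi>"
    and abs: "(\<lambda>l. \<bar>inner (\<phi> l) h\<bar>) summable_on \<Lambda>"
  shows "((\<lambda>l. inner (\<phi> l) h * inner z (\<phi> l)) has_sum inner z h) \<Lambda>"
  using has_sum_bounded_linear[OF bounded_linear_inner_right onb_expansion[OF onb abs], of z]
  by simp

lemma ennreal_infsum_real:
  fixes f :: "'a \<Rightarrow> real"
  assumes nn: "\<And>x. x \<in> A \<Longrightarrow> f x \<ge> 0" and s: "f summable_on A"
  shows "infsum (\<lambda>x. ennreal (f x)) A = ennreal (infsum f A)"
proof -
  have "infsum (\<lambda>x. ennreal (f x)) A = (SUP F\<in>{F. finite F \<and> F\<subseteq>A}. sum (\<lambda>x. ennreal (f x)) F)"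
    by (rule nonneg_infsum_complete) auto
  also have "\<dots> = (SUP F\<in>{F. finite F \<and> F\<subseteq>A}. ennreal (sum f F))"
    by (intro SUP_cong refl) (auto intro!: sum_ennreal nn)
  also have "\<dots> = ennreal (infsum f A)"
    by (rule infsum_nonneg_is_SUPREMUM_ennreal[OF s nn, symmetric])
  finally show ?thesis .
qed

lemma ennreal_infsum_fin:
  fixes f :: "'a \<Rightarrow> real"
  assumes nn: "\<And>x. x \<in> A \<Longrightarrow> f x \<ge> 0" and fin: "infsum (\<lambda>x. ennreal (f x)) A < \<infinity>"
  shows "f summable_on A"
proof (rule nonneg_bdd_above_summable_on[OF nn])
  have eq: "infsum (\<lambda>x. ennreal (f x)) A = (SUP F\<in>{F. finite F \<and> F\<subseteq>A}. sum (\<lambda>x. ennreal (f x)) F)"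
    by (rule nonneg_infsum_complete) auto
  show "bdd_above (sum f ` {F. F \<subseteq> A \<and> finite F})"
  proof (rule bdd_aboveI)
    fix y assume "y \<in> sum f ` {F. F \<subseteq> A \<and> finite F}"
    then obtain F where F: "F \<subseteq> A" "finite F" and y: "y = sum f F" by auto
    have "ennreal (sum f F) = sum (\<lambda>x. ennreal (f x)) F"
      using F nn by (intro sum_ennreal[symmetric]) auto
    also have "\<dots> \<le> infsum (\<lambda>x. ennreal (f x)) A" unfolding eq
      using F by (intro SUP_upper) auto
    finally have "ennreal (sum f F) \<le> infsum (\<lambda>x. ennreal (f x)) A" .
    hence "enn2real (ennreal (sum f F)) \<le> enn2real (infsum (\<lambda>x. ennreal (f x)) A)"
      using fin by (intro enn2real_mono) auto
    moreover have "sum f F \<ge> 0" using F nn by (intro sum_nonneg) auto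
    ultimately show "y \<le> enn2real (infsum (\<lambda>x. ennreal (f x)) A)" using y by simp
  qed
qed

lemma wl1_fin:
  assumes "\<forall>l\<in>\<Lambda>. \<kappa> l \<ge> 0" "wl1 \<Lambda> \<phi> \<kappa> h < \<infinity>"
  shows "(\<lambda>l. \<kappa> l * \<bar>inner (\<phi> l) h\<bar>) summable_on \<Lambda>"
  using assms unfolding wl1_def by (intro ennreal_infsum_fin) auto

lemma wl1_eq:
  assumes "\<forall>l\<in>\<Lambda>. \<kappa> l \<ge> 0" "(\<lambda>l. \<kappa> l * \<bar>inner (\<phi> l) h\<bar>) summable_on \<Lambda>"
  shows "wl1 \<Lambda> \<phi> \<kappa> h = ennreal (infsum (\<lambda>l. \<kappa> l * \<bar>inner (\<phi> l) h\<bar>) \<Lambda>)"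
  using assms unfolding wl1_def by (intro ennreal_infsum_real) auto

lemma coeff_abs_summable:
  assumes a: "a > 0" "\<forall>l\<in>\<Lambda>. \<kappa> l \<ge> a"
    and s: "(\<lambda>l. \<kappa> l * \<bar>inner (\<phi> l) h\<bar>) summable_on \<Lambda>"
  shows "(\<lambda>l. \<bar>inner (\<phi> l) h\<bar>) summable_on \<Lambda>"
proof (rule summable_on_comparison_test)
  show "(\<lambda>l. \<kappa> l * \<bar>inner (\<phi> l) h\<bar> * (1/a)) summable_on \<Lambda>"
    using s by (rule summable_on_cmult_left)
  fix l assume l: "l \<in> \<Lambda>"
  have "a * \<bar>inner (\<phi> l) h\<bar> \<le> \<kappa> l * \<bar>inner (\<phi> l) h\<bar>"
    using a l by (intro mult_right_mono) auto
  thus "\<bar>inner (\<phi> l) h\<bar> \<le> \<kappa> l * \<bar>inner (\<phi> l) h\<bar> * (1/a)"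
    using a by (simp add: field_simps)
qed auto

lemma span_repr:
  assumes onb: "orthonormal_basis \<Lambda> \<phi>" and F: "finite F" "F \<subseteq> \<Lambda>"
    and h: "h \<in> span (\<phi> ` F)"
  shows "h = (\<Sum>k\<in>F. inner (\<phi> k) h *\<^sub>R \<phi> k)"
  using h
proof (induction rule: span_induct_alt)
  case base thus ?case by simp
next
  case (step c x y)
  then obtain j where j: "j \<in> F" "x = \<phi> j" by auto
  have "(\<Sum>k\<in>F. inner (\<phi> k) (c *\<^sub>R x + y) *\<^sub>R \<phi> k)
      = c *\<^sub>R (\<Sum>k\<in>F. inner (\<phi> k) (\<phi> j) *\<^sub>R \<phi> k) + (\<Sum>k\<in>F. inner (\<phi> k) y *\<^sub>R \<phi> k)"
    by (simp add: j inner_add_right scaleR_add_left sum.distrib scaleR_sum_right)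
  also have "(\<Sum>k\<in>F. inner (\<phi> k) (\<phi> j) *\<^sub>R \<phi> k) = (\<Sum>k\<in>F. (if k = j then \<phi> k else 0))"
    using j onb_inner[OF onb subsetD[OF F(2)] subsetD[OF F(2)]] by (intro sum.cong) auto
  also have "\<dots> = \<phi> j" using F j by simp
  finally show ?case using step j by simp
qed

lemma finsum_in_span: "(\<Sum>k\<in>F. c k *\<^sub>R \<phi> k) \<in> span (\<phi> ` F)"
  by (intro span_sum span_scale span_base) auto

lemma subseq_fin:
  fixes c :: "nat \<Rightarrow> 'l \<Rightarrow> real"
  shows "finite F \<Longrightarrow> (\<And>n l. l \<in> F \<Longrightarrow> \<bar>c n l\<bar> \<le> B) \<Longrightarrow> \<exists>r. strict_mono r \<and> (\<forall>l\<in>F. convergent (\<lambda>n. c (r n) l))"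
proof (induction F rule: finite_induct)
  case empty thus ?case by (intro exI[of _ id]) (auto simp: strict_mono_def)
next
  case (insert k F)
  note bd = insert.prems
  have "\<exists>r. strict_mono r \<and> (\<forall>l\<in>F. convergent (\<lambda>n. c (r n) l))" using insert.IH bd by blast
  then obtain r where r: "strict_mono r" "\<forall>l\<in>F. convergent (\<lambda>n. c (r n) l)" by blast
  obtain s where s: "strict_mono s" "monoseq (\<lambda>n. c (r (s n)) k)"
    using seq_monosub[of "\<lambda>n. c (r n) k"] by blast
  have "Bseq (\<lambda>n. c (r (s n)) k)" by (rule BseqI'[of _ B]) (use bd in auto)
  hence ck: "convergent (\<lambda>n. c (r (s n)) k)" using s(2) by (rule Bseq_monoseq_convergent)
  have "convergent (\<lambda>n. c (r (s n)) l)" if "l \<in> F" for l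
  proof -
    from r(2) that obtain L where "(\<lambda>n. c (r n) l) \<longlonglongrightarrow> L" by (auto simp: convergent_def)
    from LIMSEQ_subseq_LIMSEQ[OF this s(1)] show ?thesis by (auto simp: convergent_def o_def)
  qed
  thus ?case using ck strict_mono_o[OF r(1) s(1)] by (intro exI[of _ "r \<circ> s"]) (auto simp: o_def)
qed

lemma lower_bound_fin:
  fixes A :: "'a::real_inner \<Rightarrow> 'b::real_normed_vector"
  assumes onb: "orthonormal_basis \<Lambda> \<phi>" and F: "finite F" "F \<subseteq> \<Lambda>"
    and A: "bounded_linear A" and inj: "inj_on A (span (\<phi> ` F))"
  shows "\<exists>K. \<forall>h\<in>span (\<phi> ` F). norm h \<le> K * norm (A h)"
proof (rule ccontr)
  interpret A: bounded_linear A by fact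
  assume "\<not> ?thesis"
  hence "\<forall>n::nat. \<exists>h\<in>span (\<phi> ` F). norm h > real (Suc n) * norm (A h)"
    by (metis not_le)
  then obtain h where h: "\<And>n. h n \<in> span (\<phi> ` F)" "\<And>n. norm (h n) > real (Suc n) * norm (A (h n))"
    by metis
  define g where "g n = h n /\<^sub>R norm (h n)" for n
  have hn0: "h n \<noteq> 0" for n using h(2)[of n] by auto
  have g1: "norm (g n) = 1" for n using hn0 by (simp add: g_def)
  have gspan: "g n \<in> span (\<phi> ` F)" for n unfolding g_def using h(1) by (intro span_scale)
  have gA: "norm (A (g n)) < 1 / real (Suc n)" for n
  proof -
    have "norm (A (g n)) = norm (A (h n)) / norm (h n)" using hn0 by (simp add: g_def A.scaleR field_simps)
    also have "\<dots> < 1 / real (Suc n)" using h(2)[of n] hn0 by (simp add: field_simps)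
    finally show ?thesis .
  qed
  define c where "c n l = inner (\<phi> l) (g n)" for n l
  have "\<bar>c n l\<bar> \<le> 1" if "l \<in> F" for n l
  proof -
    have "\<bar>c n l\<bar> \<le> norm (\<phi> l) * norm (g n)" unfolding c_def by (rule Cauchy_Schwarz_ineq2)
    also have "norm (\<phi> l) = 1" using onb that F unfolding orthonormal_basis_def
      by (metis norm_eq_sqrt_inner real_sqrt_one subsetD)
    finally show ?thesis using g1 by simp
  qed
  then obtain r where r: "strict_mono r" "\<forall>l\<in>F. convergent (\<lambda>n. c (r n) l)"
    using subseq_fin[OF F(1), of c 1] by auto
  define cl where "cl l = lim (\<lambda>n. c (r n) l)" for l
  have cl: "(\<lambda>n. c (r n) l) \<longlonglongrightarrow> cl l" if "l \<in> F" for l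
    using r(2) that by (simp add: cl_def convergent_LIMSEQ_iff)
  define g0 where "g0 = (\<Sum>k\<in>F. cl k *\<^sub>R \<phi> k)"
  have geq: "g (r n) = (\<Sum>k\<in>F. c (r n) k *\<^sub>R \<phi> k)" for n
    unfolding c_def by (rule span_repr[OF onb F gspan])
  have lim: "(\<lambda>n. g (r n)) \<longlonglongrightarrow> g0"
    unfolding geq g0_def by (intro tendsto_sum tendsto_scaleR cl tendsto_const)
  have "(\<lambda>n. norm (g (r n))) \<longlonglongrightarrow> norm g0" by (rule tendsto_norm[OF lim])
  hence "norm g0 = 1" using g1 by (simp add: LIMSEQ_const_iff)
  have "(\<lambda>n. A (g (r n))) \<longlonglongrightarrow> A g0" by (rule A.tendsto[OF lim])
  moreover have "(\<lambda>n. A (g (r n))) \<longlonglongrightarrow> 0"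
  proof (rule tendsto_norm_zero_cancel, rule Lim_null_comparison[OF _ lim_inverse_n'])
    show "\<forall>\<^sub>F n in sequentially. norm (norm (A (g (r n)))) \<le> 1 / real n"
    proof (rule eventually_sequentiallyI[of 1])
      fix n :: nat assume "1 \<le> n"
      have "norm (A (g (r n))) < 1 / real (Suc (r n))" by (rule gA)
      also have "\<dots> \<le> 1 / real n"
        using seq_suble[OF r(1), of n] \<open>1 \<le> n\<close> by (intro divide_left_mono) auto
      finally show "norm (norm (A (g (r n)))) \<le> 1 / real n" by simp
    qed
  qed
  ultimately have "A g0 = 0" using LIMSEQ_unique by blast
  moreover have "g0 \<in> span (\<phi> ` F)" unfolding g0_def by (rule finsum_in_span)
  ultimately have "g0 = 0" using inj A.zero span_zero unfolding inj_on_def by metis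
  thus False using \<open>norm g0 = 1\<close> by simp
qed

lemma inv_opnorm_bound:
  fixes A :: "'a::real_inner \<Rightarrow> 'b::real_normed_vector"
  assumes onb: "orthonormal_basis \<Lambda> \<phi>" and F: "finite F" "F \<subseteq> \<Lambda>"
    and A: "bounded_linear A" and inj: "inj_on A (span (\<phi> ` F))"
  shows "inv_opnorm A (span (\<phi> ` F)) \<ge> 0"
    and "\<And>h. h \<in> span (\<phi> ` F) \<Longrightarrow> norm h \<le> inv_opnorm A (span (\<phi> ` F)) * norm (A h)"
proof -
  interpret A: bounded_linear A by fact
  obtain K where K: "\<And>h. h\<in>span (\<phi> ` F) \<Longrightarrow> norm h \<le> K * norm (A h)"
    using lower_bound_fin[OF assms] by blast
  define Sset where "Sset = {norm h | h. h \<in> span (\<phi> ` F) \<and> norm (A h) \<le> 1}"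
  have "0 \<in> Sset" unfolding Sset_def by (auto intro!: exI[of _ 0] span_zero)
  have bdd: "bdd_above Sset"
  proof (rule bdd_aboveI[of _ "max K 0"])
    fix x assume "x \<in> Sset"
    then obtain h where "x = norm h" "h \<in> span (\<phi> ` F)" "norm (A h) \<le> 1" by (auto simp: Sset_def)
    moreover have "K * norm (A h) \<le> max K 0"
      using \<open>norm (A h) \<le> 1\<close> by (cases "K \<ge> 0") (auto simp: mult_left_le mult_nonpos_nonneg order_trans[of _ 0])
    ultimately show "x \<le> max K 0" using K by (meson order_trans)
  qed
  have ub: "x \<le> inv_opnorm A (span (\<phi> ` F))" if "x \<in> Sset" for x
    unfolding inv_opnorm_def Sset_def[symmetric] using that bdd by (rule cSup_upper)
  show "inv_opnorm A (span (\<phi> ` F)) \<ge> 0" using ub[OF \<open>0 \<in> Sset\<close>] .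
  fix h assume h: "h \<in> span (\<phi> ` F)"
  show "norm h \<le> inv_opnorm A (span (\<phi> ` F)) * norm (A h)"
  proof (cases "A h = 0")
    case True
    hence "h = 0" using inj h A.zero span_zero unfolding inj_on_def by metis
    thus ?thesis by simp
  next
    case False
    let ?h = "h /\<^sub>R norm (A h)"
    have "norm ?h \<in> Sset" unfolding Sset_def using h False
      by (auto intro!: exI[of _ ?h] span_scale simp: A.scaleR)
    hence "norm h / norm (A h) \<le> inv_opnorm A (span (\<phi> ` F))" using ub by (simp add: divide_inverse_commute)
    thus ?thesis using False pos_divide_le_eq[of "norm (A h)" "norm h"] by simp
  qed
qed

lemma has_sum_diff':
  fixes f g :: "'a \<Rightarrow> real"
  assumes "(f has_sum a) A" "(g has_sum b) A"
  shows "((\<lambda>x. f x - g x) has_sum (a - b)) A"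
proof -
  have "((\<lambda>x. - g x) has_sum (- b)) A" using assms(2) by (simp add: has_sum_uminus)
  from has_sum_add[OF assms(1) this] show ?thesis by simp
qed

lemma wl1_single:
  assumes onb: "orthonormal_basis \<Lambda> \<phi>" and l: "l \<in> \<Lambda>"
  shows "wl1 \<Lambda> \<phi> \<kappa> (\<phi> l) = ennreal (\<kappa> l)"
proof -
  have "((\<lambda>j. ennreal (\<kappa> j * \<bar>inner (\<phi> j) (\<phi> l)\<bar>)) has_sum ennreal (\<kappa> l)) \<Lambda>"
  proof (rule has_sum_finite_neutralI[where B="{l}"])
    show "\<And>x. x \<in> \<Lambda> - {l} \<Longrightarrow> ennreal (\<kappa> x * \<bar>inner (\<phi> x) (\<phi> l)\<bar>) = 0"
      using onb_inner[OF onb _ l] by auto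
    show "ennreal (\<kappa> l) = (\<Sum>x\<in>{l}. ennreal (\<kappa> x * \<bar>inner (\<phi> x) (\<phi> l)\<bar>))"
      using onb_inner[OF onb l l] by simp
  qed (use l in auto)
  thus ?thesis unfolding wl1_def by (rule infsumI)
qed

lemma wl1_subgrad:
  fixes hs :: "'h::{real_inner,complete_space}"
  assumes onb: "orthonormal_basis \<Lambda> \<phi>" and a: "a > 0" "\<forall>l\<in>\<Lambda>. \<kappa> l \<ge> a"
    and sg: "\<eta> \<in> subdiff (\<lambda>h. enn2ereal (wl1 \<Lambda> \<phi> \<kappa> h)) hs"
  shows "wl1 \<Lambda> \<phi> \<kappa> hs < \<infinity>"
    and "(\<lambda>l. \<kappa> l * \<bar>inner (\<phi> l) hs\<bar>) summable_on \<Lambda>"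
    and "infsum (\<lambda>l. \<kappa> l * \<bar>inner (\<phi> l) hs\<bar>) \<Lambda> = inner \<eta> hs"
    and "\<forall>l\<in>\<Lambda>. \<bar>inner (\<phi> l) \<eta>\<bar> \<le> \<kappa> l"
    and "\<And>z. wl1 \<Lambda> \<phi> \<kappa> z < \<infinity> \<Longrightarrow> inner \<eta> z \<le> infsum (\<lambda>l. \<kappa> l * \<bar>inner (\<phi> l) z\<bar>) \<Lambda>"
proof -
  have k0: "\<forall>l\<in>\<Lambda>. \<kappa> l \<ge> 0" using a by force
  have sg': "\<And>z. enn2ereal (wl1 \<Lambda> \<phi> \<kappa> hs) + ereal (inner \<eta> (z - hs)) \<le> enn2ereal (wl1 \<Lambda> \<phi> \<kappa> z)"
    using sg by (simp add: subdiff_def)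
  have w0: "wl1 \<Lambda> \<phi> \<kappa> 0 = 0" by (simp add: wl1_def)
  show fin: "wl1 \<Lambda> \<phi> \<kappa> hs < \<infinity>"
  proof (rule ccontr)
    assume "\<not> ?thesis" hence "wl1 \<Lambda> \<phi> \<kappa> hs = \<infinity>" by (metis infinity_ennreal_def less_top)
    then show False using sg'[of 0] w0 by simp
  qed
  show sh: "(\<lambda>l. \<kappa> l * \<bar>inner (\<phi> l) hs\<bar>) summable_on \<Lambda>" by (rule wl1_fin[OF k0 fin])
  define Ls where "Ls = infsum (\<lambda>l. \<kappa> l * \<bar>inner (\<phi> l) hs\<bar>) \<Lambda>"
  have Ls_eq: "wl1 \<Lambda> \<phi> \<kappa> hs = ennreal Ls" unfolding Ls_def by (rule wl1_eq[OF k0 sh])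
  have Ls0: "Ls \<ge> 0" unfolding Ls_def using k0 by (intro infsum_nonneg) auto
  have gen: "Ls + inner \<eta> (z - hs) \<le> Lz" if "wl1 \<Lambda> \<phi> \<kappa> z = ennreal Lz" "Lz \<ge> 0" for z Lz
    using sg'[of z] that Ls_eq Ls0 by simp
  have "Ls + inner \<eta> (0 - hs) \<le> 0" by (rule gen) (simp_all add: w0)
  moreover have "Ls + inner \<eta> (2 *\<^sub>R hs - hs) \<le> 2 * Ls"
  proof (rule gen)
    have eq: "(\<lambda>l. \<kappa> l * \<bar>inner (\<phi> l) (2 *\<^sub>R hs)\<bar>) = (\<lambda>l. 2 * (\<kappa> l * \<bar>inner (\<phi> l) hs\<bar>))"
      by (simp add: abs_mult mult.left_commute)
    have "(\<lambda>l. \<kappa> l * \<bar>inner (\<phi> l) (2 *\<^sub>R hs)\<bar>) summable_on \<Lambda>"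
      unfolding eq using sh by (rule summable_on_cmult_right)
    hence "wl1 \<Lambda> \<phi> \<kappa> (2 *\<^sub>R hs) = ennreal (infsum (\<lambda>l. \<kappa> l * \<bar>inner (\<phi> l) (2 *\<^sub>R hs)\<bar>) \<Lambda>)"
      by (rule wl1_eq[OF k0])
    also have "infsum (\<lambda>l. \<kappa> l * \<bar>inner (\<phi> l) (2 *\<^sub>R hs)\<bar>) \<Lambda> = 2 * Ls"
      unfolding eq Ls_def by (rule infsum_cmult_right) (use sh in auto)
    finally show "wl1 \<Lambda> \<phi> \<kappa> (2 *\<^sub>R hs) = ennreal (2 * Ls)" .
  qed (use Ls0 in auto)
  ultimately have Ls_inner: "Ls = inner \<eta> hs" by (simp add: inner_diff_right algebra_simps)
  thus "infsum (\<lambda>l. \<kappa> l * \<bar>inner (\<phi> l) hs\<bar>) \<Lambda> = inner \<eta> hs" by (simp add: Ls_def)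
  show "\<forall>l\<in>\<Lambda>. \<bar>inner (\<phi> l) \<eta>\<bar> \<le> \<kappa> l"
  proof
    fix l assume l: "l \<in> \<Lambda>"
    have "Ls + inner \<eta> (\<phi> l - hs) \<le> \<kappa> l" by (rule gen) (use wl1_single[OF onb l] k0 l in auto)
    moreover have "wl1 \<Lambda> \<phi> \<kappa> (- \<phi> l) = wl1 \<Lambda> \<phi> \<kappa> (\<phi> l)" by (simp add: wl1_def)
    hence "Ls + inner \<eta> (- \<phi> l - hs) \<le> \<kappa> l" by (intro gen) (use wl1_single[OF onb l] k0 l in auto)
    ultimately show "\<bar>inner (\<phi> l) \<eta>\<bar> \<le> \<kappa> l" using Ls_inner
      by (simp add: inner_diff_right inner_commute abs_le_iff)
  qed
  fix z assume zf: "wl1 \<Lambda> \<phi> \<kappa> z < \<infinity>"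
  have sz: "(\<lambda>l. \<kappa> l * \<bar>inner (\<phi> l) z\<bar>) summable_on \<Lambda>" by (rule wl1_fin[OF k0 zf])
  have "Ls + inner \<eta> (z - hs) \<le> infsum (\<lambda>l. \<kappa> l * \<bar>inner (\<phi> l) z\<bar>) \<Lambda>"
    by (rule gen[OF wl1_eq[OF k0 sz]]) (use k0 in \<open>auto intro: infsum_nonneg\<close>)
  thus "inner \<eta> z \<le> infsum (\<lambda>l. \<kappa> l * \<bar>inner (\<phi> l) z\<bar>) \<Lambda>"
    using Ls_inner by (simp add: inner_diff_right)
qed

lemma rem_norm:
  fixes e :: "'h::{real_inner,complete_space}"
  assumes onb: "orthonormal_basis \<Lambda> \<phi>" and F: "finite \<Omega>" "\<Omega> \<subseteq> \<Lambda>"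
    and s: "(\<lambda>l. \<bar>inner (\<phi> l) e\<bar>) summable_on \<Lambda>"
  shows "norm (e - (\<Sum>k\<in>\<Omega>. inner (\<phi> k) e *\<^sub>R \<phi> k)) \<le> infsum (\<lambda>l. \<bar>inner (\<phi> l) e\<bar>) (\<Lambda> - \<Omega>)"
proof -
  define r where "r = e - (\<Sum>k\<in>\<Omega>. inner (\<phi> k) e *\<^sub>R \<phi> k)"
  have rl: "inner (\<phi> l) r = (if l \<in> \<Omega> then 0 else inner (\<phi> l) e)" if "l \<in> \<Lambda>" for l
    unfolding r_def inner_diff_right finsum_coeff[OF onb F that] by simp
  have sr: "(\<lambda>l. \<bar>inner (\<phi> l) r\<bar>) summable_on \<Lambda>"
    by (rule summable_on_comparison_test[OF s]) (auto simp: rl)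
  have "norm r \<le> infsum (\<lambda>l. \<bar>inner (\<phi> l) r\<bar>) \<Lambda>" by (rule onb_norm_le[OF onb sr])
  also have "\<dots> = infsum (\<lambda>l. \<bar>inner (\<phi> l) e\<bar>) (\<Lambda> - \<Omega>)"
    by (rule infsum_cong_neutral) (auto simp: rl)
  finally show ?thesis by (simp add: r_def)
qed

lemma l1_gap:
  fixes h hs :: "'h::{real_inner,complete_space}"
  assumes onb: "orthonormal_basis \<Lambda> \<phi>" and a: "a > 0" "\<forall>l\<in>\<Lambda>. \<kappa> l \<ge> a"
    and le: "\<forall>l\<in>\<Lambda>. \<bar>inner (\<phi> l) \<eta>\<bar> \<le> \<kappa> l"
    and sh: "(\<lambda>l. \<kappa> l * \<bar>inner (\<phi> l) h\<bar>) summable_on \<Lambda>"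
    and shs: "(\<lambda>l. \<kappa> l * \<bar>inner (\<phi> l) hs\<bar>) summable_on \<Lambda>"
    and eqs: "infsum (\<lambda>l. \<kappa> l * \<bar>inner (\<phi> l) hs\<bar>) \<Lambda> = inner \<eta> hs"
  shows "(\<lambda>l. (\<kappa> l - \<bar>inner (\<phi> l) \<eta>\<bar>) * \<bar>inner (\<phi> l) (h - hs)\<bar>) summable_on (\<Lambda> - \<Omega>)"
    and "infsum (\<lambda>l. (\<kappa> l - \<bar>inner (\<phi> l) \<eta>\<bar>) * \<bar>inner (\<phi> l) (h - hs)\<bar>) (\<Lambda> - \<Omega>)
         \<le> infsum (\<lambda>l. \<kappa> l * \<bar>inner (\<phi> l) h\<bar>) \<Lambda> - inner \<eta> h"
proof -
  define gh where "gh z l = \<kappa> l * \<bar>inner (\<phi> l) z\<bar> - inner (\<phi> l) z * inner \<eta> (\<phi> l)" for z l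
  have hsum: "((\<lambda>l. gh z l) has_sum (infsum (\<lambda>l. \<kappa> l * \<bar>inner (\<phi> l) z\<bar>) \<Lambda> - inner \<eta> z)) \<Lambda>"
    if sz: "(\<lambda>l. \<kappa> l * \<bar>inner (\<phi> l) z\<bar>) summable_on \<Lambda>" for z
    unfolding gh_def
    by (rule has_sum_diff'[OF has_sum_infsum[OF sz] onb_inner_expansion[OF onb coeff_abs_summable[OF a sz]]])
  define G where "G l = gh h l + gh hs l" for l
  have Gsum: "(G has_sum (infsum (\<lambda>l. \<kappa> l * \<bar>inner (\<phi> l) h\<bar>) \<Lambda> - inner \<eta> h)) \<Lambda>"
    using has_sum_add[OF hsum[OF sh] hsum[OF shs]] eqs unfolding G_def by simp
  have ghnn: "gh z l \<ge> (\<kappa> l - \<bar>inner (\<phi> l) \<eta>\<bar>) * \<bar>inner (\<phi> l) z\<bar>" for z l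
  proof -
    have "inner (\<phi> l) z * inner \<eta> (\<phi> l) \<le> \<bar>inner (\<phi> l) z\<bar> * \<bar>inner (\<phi> l) \<eta>\<bar>"
      by (metis abs_ge_self abs_mult inner_commute)
    thus ?thesis unfolding gh_def by (simp add: algebra_simps)
  qed
  have fle: "(\<kappa> l - \<bar>inner (\<phi> l) \<eta>\<bar>) * \<bar>inner (\<phi> l) (h - hs)\<bar> \<le> G l" if l: "l \<in> \<Lambda>" for l
  proof -
    have k: "\<kappa> l - \<bar>inner (\<phi> l) \<eta>\<bar> \<ge> 0" using le l by auto
    have "\<bar>inner (\<phi> l) (h - hs)\<bar> \<le> \<bar>inner (\<phi> l) h\<bar> + \<bar>inner (\<phi> l) hs\<bar>"
      by (simp add: inner_diff_right abs_triangle_ineq4)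
    hence "(\<kappa> l - \<bar>inner (\<phi> l) \<eta>\<bar>) * \<bar>inner (\<phi> l) (h - hs)\<bar>
        \<le> (\<kappa> l - \<bar>inner (\<phi> l) \<eta>\<bar>) * (\<bar>inner (\<phi> l) h\<bar> + \<bar>inner (\<phi> l) hs\<bar>)"
      using k by (rule mult_left_mono)
    also have "\<dots> \<le> G l" unfolding G_def using ghnn[of l h] ghnn[of l hs] by (simp add: algebra_simps)
    finally show ?thesis .
  qed
  have fnn: "(\<kappa> l - \<bar>inner (\<phi> l) \<eta>\<bar>) * \<bar>inner (\<phi> l) (h - hs)\<bar> \<ge> 0" if "l \<in> \<Lambda>" for l
    using le that by auto
  have Gs: "G summable_on \<Lambda>" using Gsum by (auto simp: summable_on_def)
  have Gs': "G summable_on (\<Lambda> - \<Omega>)" by (rule summable_on_subset[OF Gs]) auto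
  show fs: "(\<lambda>l. (\<kappa> l - \<bar>inner (\<phi> l) \<eta>\<bar>) * \<bar>inner (\<phi> l) (h - hs)\<bar>) summable_on (\<Lambda> - \<Omega>)"
    by (rule summable_on_comparison_test[OF Gs']) (use fle fnn in auto)
  have "infsum (\<lambda>l. (\<kappa> l - \<bar>inner (\<phi> l) \<eta>\<bar>) * \<bar>inner (\<phi> l) (h - hs)\<bar>) (\<Lambda> - \<Omega>) \<le> infsum G \<Lambda>"
  proof (rule infsum_mono_neutral[OF fs Gs])
    show "\<And>x. x \<in> \<Lambda> - (\<Lambda> - \<Omega>) \<Longrightarrow> 0 \<le> G x"
      using fle fnn by (meson DiffD1 order_trans)
  qed (use fle in auto)
  also have "infsum G \<Lambda> = infsum (\<lambda>l. \<kappa> l * \<bar>inner (\<phi> l) h\<bar>) \<Lambda> - inner \<eta> h"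
    using Gsum by (rule infsumI)
  finally show "infsum (\<lambda>l. (\<kappa> l - \<bar>inner (\<phi> l) \<eta>\<bar>) * \<bar>inner (\<phi> l) (h - hs)\<bar>) (\<Lambda> - \<Omega>)
         \<le> infsum (\<lambda>l. \<kappa> l * \<bar>inner (\<phi> l) h\<bar>) \<Lambda> - inner \<eta> h" .
qed

theorem mainTheorem1:
  fixes W :: "'x::{real_inner, complete_space} \<Rightarrow> 'h::{real_inner, complete_space}"
    and A :: "'h \<Rightarrow> 'y::{real_inner, complete_space}"
    and R :: "'x \<Rightarrow> ennreal"
    and \<Lambda> :: "'l set" and \<phi> :: "'l \<Rightarrow> 'h" and \<kappa> :: "'l \<Rightarrow> real" and a :: real
    and xs :: 'x and hs :: 'h and ys :: 'y and u :: 'h and v :: 'y and C :: real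
  assumes sepX: "separable_space (euclidean :: 'x topology)"
    and sepH: "separable_space (euclidean :: 'h topology)"
    and sepY: "separable_space (euclidean :: 'y topology)"
    and W_lin: "bounded_linear W" and A_lin: "bounded_linear A"
    and R_proper: "proper_fun R" and R_convex: "convex_fun R" and R_wlsc: "weakly_lsc R"
    and \<Lambda>_countable: "countable \<Lambda>" and onb: "orthonormal_basis \<Lambda> \<phi>"
    and a_pos: "a > 0" and \<kappa>_ge: "\<forall>l\<in>\<Lambda>. \<kappa> l \<ge> a"
    and feasible: "\<exists>x. R x + wl1 \<Lambda> \<phi> \<kappa> (W x) < \<infinity>"
    and c11: "W xs = hs" "A hs = ys"
    and c12: "adjoint W u \<in> subdiff (\<lambda>x. enn2ereal (R x)) xs"
    and c13: "adjoint A v - u \<in> subdiff (\<lambda>h. enn2ereal (wl1 \<Lambda> \<phi> \<kappa> h)) hs"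
    and c14: "inj_on A (HOmega \<phi> (Omega \<Lambda> \<phi> \<kappa> (adjoint A v - u)))"
    and C_pos: "C > 0"
  shows "\<forall>\<delta> yd \<alpha> xa ha.
     \<delta> > 0 \<and> norm (yd - ys) \<le> \<delta> \<and> \<alpha> = C * \<delta> \<and>
     (\<forall>x h. ereal (1/2 * (norm (W xa - ha))\<^sup>2 + 1/2 * (norm (A ha - yd))\<^sup>2)
               + ereal \<alpha> * enn2ereal (R xa + wl1 \<Lambda> \<phi> \<kappa> ha)
           \<le> ereal (1/2 * (norm (W x - h))\<^sup>2 + 1/2 * (norm (A h - yd))\<^sup>2)
               + ereal \<alpha> * enn2ereal (R x + wl1 \<Lambda> \<phi> \<kappa> h))
     \<longrightarrow>
     (let \<eta> = adjoint A v - u;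
          \<Omega> = Omega \<Lambda> \<phi> \<kappa> \<eta>;
          N = sqrt ((norm u)\<^sup>2 + (norm v)\<^sup>2);
          c = (1 + C * N)\<^sup>2 / (2 * C);
          Ainv = inv_opnorm A (HOmega \<phi> \<Omega>);
          d = 2 * Ainv * (1 + C * N)
              + (if \<Lambda> = \<Omega> then 0 else (1 + Ainv * onorm A) / mgap \<Lambda> \<phi> \<kappa> \<eta> * c)
      in bregman (\<lambda>x. enn2ereal (R x)) (adjoint W u) xa xs \<le> ereal (c * \<delta>)
         \<and> norm (ha - hs) \<le> d * \<delta>)"
proof (intro allI impI)
  fix \<delta> yd \<alpha> xa ha
  assume H: "\<delta> > 0 \<and> norm (yd - ys) \<le> \<delta> \<and> \<alpha> = C * \<delta> \<and>
     (\<forall>x h. ereal (1/2 * (norm (W xa - ha))\<^sup>2 + 1/2 * (norm (A ha - yd))\<^sup>2)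
               + ereal \<alpha> * enn2ereal (R xa + wl1 \<Lambda> \<phi> \<kappa> ha)
           \<le> ereal (1/2 * (norm (W x - h))\<^sup>2 + 1/2 * (norm (A h - yd))\<^sup>2)
               + ereal \<alpha> * enn2ereal (R x + wl1 \<Lambda> \<phi> \<kappa> h))"
  have \<delta>0: "\<delta> > 0" and ydd: "norm (yd - ys) \<le> \<delta>" and \<alpha>d: "\<alpha> = C * \<delta>" using H by auto
  have M: "ereal (1/2 * (norm (W xa - ha))\<^sup>2 + 1/2 * (norm (A ha - yd))\<^sup>2)
               + ereal \<alpha> * enn2ereal (R xa + wl1 \<Lambda> \<phi> \<kappa> ha)
           \<le> ereal (1/2 * (norm (W xs - hs))\<^sup>2 + 1/2 * (norm (A hs - yd))\<^sup>2)
               + ereal \<alpha> * enn2ereal (R xs + wl1 \<Lambda> \<phi> \<kappa> hs)"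
    using H by blast
  have \<alpha>0: "\<alpha> > 0" using \<alpha>d C_pos \<delta>0 by simp
  interpret W: bounded_linear W by (rule W_lin)
  interpret A: bounded_linear A by (rule A_lin)
  define \<eta> where "\<eta> = adjoint A v - u"
  define \<Omega> where "\<Omega> = Omega \<Lambda> \<phi> \<kappa> \<eta>"
  define N where "N = sqrt ((norm u)\<^sup>2 + (norm v)\<^sup>2)"
  define c where "c = (1 + C * N)\<^sup>2 / (2 * C)"
  define Ainv where "Ainv = inv_opnorm A (HOmega \<phi> \<Omega>)"
  define d where "d = 2 * Ainv * (1 + C * N)
              + (if \<Lambda> = \<Omega> then 0 else (1 + Ainv * onorm A) / mgap \<Lambda> \<phi> \<kappa> \<eta> * c)"
  have adjW: "\<And>x. inner (W x) u = inner x (adjoint W u)" by (rule adjoint_hilbert[OF W_lin])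
  have adjA: "\<And>h. inner (A h) v = inner h (adjoint A v)" by (rule adjoint_hilbert[OF A_lin])
  have k0: "\<forall>l\<in>\<Lambda>. \<kappa> l \<ge> 0" using a_pos \<kappa>_ge by force
  note sub = wl1_subgrad[OF onb a_pos \<kappa>_ge c13[folded \<eta>_def]]
  define Lhs where "Lhs = infsum (\<lambda>l. \<kappa> l * \<bar>inner (\<phi> l) hs\<bar>) \<Lambda>"
  have Lhs_eq: "wl1 \<Lambda> \<phi> \<kappa> hs = ennreal Lhs" unfolding Lhs_def by (rule wl1_eq[OF k0 sub(2)])
  have Lhs0: "Lhs \<ge> 0" unfolding Lhs_def using k0 by (intro infsum_nonneg) auto
  have Lhs_inner: "Lhs = inner \<eta> hs" unfolding Lhs_def by (rule sub(3))
  have c12': "\<And>z. enn2ereal (R xs) + ereal (inner (adjoint W u) (z - xs)) \<le> enn2ereal (R z)"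
    using c12 by (simp add: subdiff_def)
  obtain x0 where x0: "R x0 < \<infinity>" using R_proper unfolding proper_fun_def by blast
  have Rxs_fin: "R xs < \<infinity>"
  proof (rule ccontr)
    assume "\<not> ?thesis" hence "R xs = \<infinity>" by (metis infinity_ennreal_def less_top)
    hence "enn2ereal (R x0) = \<infinity>" using c12'[of x0] by simp
    thus False using x0 by simp
  qed
  define Rs where "Rs = enn2real (R xs)"
  have Rs_eq: "R xs = ennreal Rs" using Rxs_fin unfolding Rs_def by (metis ennreal_enn2real infinity_ennreal_def)
  have Rs0: "Rs \<ge> 0" unfolding Rs_def by (rule enn2real_nonneg)
  define Q0 where "Q0 = 1/2 * (norm (W xs - hs))\<^sup>2 + 1/2 * (norm (A hs - yd))\<^sup>2"
  define P0 where "P0 = 1/2 * (norm (W xa - ha))\<^sup>2 + 1/2 * (norm (A ha - yd))\<^sup>2"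
  have rhs: "enn2ereal (R xs + wl1 \<Lambda> \<phi> \<kappa> hs) = ereal (Rs + Lhs)"
    using Rs0 Lhs0 by (simp del: ennreal_plus add: Rs_eq Lhs_eq ennreal_plus[symmetric])
  have M': "ereal P0 + ereal \<alpha> * enn2ereal (R xa + wl1 \<Lambda> \<phi> \<kappa> ha) \<le> ereal (Q0 + \<alpha> * (Rs + Lhs))"
    using M unfolding P0_def[symmetric] Q0_def[symmetric] rhs by simp
  have sfin: "R xa + wl1 \<Lambda> \<phi> \<kappa> ha < \<infinity>"
  proof (rule ccontr)
    assume "\<not> ?thesis" hence "R xa + wl1 \<Lambda> \<phi> \<kappa> ha = \<infinity>" by (metis infinity_ennreal_def less_top)
    hence e: "enn2ereal (R xa + wl1 \<Lambda> \<phi> \<kappa> ha) = \<infinity>" by (simp add: infinity_ennreal_def)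
    have "ereal \<alpha> * enn2ereal (R xa + wl1 \<Lambda> \<phi> \<kappa> ha) = \<infinity>" using \<alpha>0 by (simp add: e)
    hence inf: "ereal P0 + ereal \<alpha> * enn2ereal (R xa + wl1 \<Lambda> \<phi> \<kappa> ha) = \<infinity>" by simp
    have "\<infinity> \<le> ereal (Q0 + \<alpha> * (Rs + Lhs))" using M' unfolding inf .
    thus False by simp
  qed
  have Rxa_fin: "R xa < \<infinity>" and Lha_fin: "wl1 \<Lambda> \<phi> \<kappa> ha < \<infinity>"
    using sfin by (auto simp: infinity_ennreal_def)
  define Rxa where "Rxa = enn2real (R xa)"
  have Rxa_eq: "R xa = ennreal Rxa" using Rxa_fin unfolding Rxa_def by (metis ennreal_enn2real infinity_ennreal_def)
  have Rxa0: "Rxa \<ge> 0" unfolding Rxa_def by (rule enn2real_nonneg)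
  have sha: "(\<lambda>l. \<kappa> l * \<bar>inner (\<phi> l) ha\<bar>) summable_on \<Lambda>" by (rule wl1_fin[OF k0 Lha_fin])
  define Lha where "Lha = infsum (\<lambda>l. \<kappa> l * \<bar>inner (\<phi> l) ha\<bar>) \<Lambda>"
  have Lha_eq: "wl1 \<Lambda> \<phi> \<kappa> ha = ennreal Lha" unfolding Lha_def by (rule wl1_eq[OF k0 sha])
  have Lha0: "Lha \<ge> 0" unfolding Lha_def using k0 by (intro infsum_nonneg) auto
  have lhs: "enn2ereal (R xa + wl1 \<Lambda> \<phi> \<kappa> ha) = ereal (Rxa + Lha)"
    using Rxa0 Lha0 by (simp del: ennreal_plus add: Rxa_eq Lha_eq ennreal_plus[symmetric])
  have Mr: "P0 + \<alpha> * (Rxa + Lha) \<le> Q0 + \<alpha> * (Rs + Lhs)"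
    using M' unfolding lhs by simp
  have DRnn: "Rs + inner (W xa - hs) u \<le> Rxa"
  proof -
    have "inner (adjoint W u) (xa - xs) = inner (W xa - hs) u"
      using adjW[of "xa - xs"] by (simp add: inner_commute W.diff c11)
    thus ?thesis using c12'[of xa] Rs_eq Rxa_eq Rs0 Rxa0 by simp
  qed
  have DLnn: "inner \<eta> ha \<le> Lha" unfolding Lha_def by (rule sub(5)[OF Lha_fin])
  have adjA': "\<And>h. inner (adjoint A v) h = inner (A h) v" using adjA by (simp add: inner_commute)
  have eta_ha: "inner \<eta> ha = inner (A ha) v - inner u ha"
    unfolding \<eta>_def inner_diff_left adjA' ..
  have eta_hs: "inner \<eta> hs = inner ys v - inner u hs"
    unfolding \<eta>_def inner_diff_left adjA' c11 ..
  define p where "p = W xa - ha"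
  define q where "q = A ha - yd"
  define s where "s = yd - ys"
  define DR where "DR = Rxa - Rs - inner (W xa - hs) u"
  define DL where "DL = Lha - inner \<eta> ha"
  have DR0: "DR \<ge> 0" using DRnn by (simp add: DR_def)
  have DL0: "DL \<ge> 0" using DLnn by (simp add: DL_def)
  have ident: "inner (W xa - hs) u + inner \<eta> ha - Lhs = inner p u + inner q v + inner s v"
  proof -
    have "W xa - hs = p + (ha - hs)" by (simp add: p_def)
    hence 1: "inner (W xa - hs) u = inner p u + inner ha u - inner hs u"
      by (simp add: inner_add_left inner_diff_left)
    have 2: "inner (A ha) v = inner q v + inner s v + inner ys v"
      by (simp add: q_def s_def inner_diff_left)
    show ?thesis unfolding 1 eta_ha Lhs_inner eta_hs 2 by (simp add: inner_commute)
  qed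
  have Q0s: "Q0 = 1/2 * (norm s)\<^sup>2"
    unfolding Q0_def s_def using c11 by (simp add: norm_minus_commute)
  have P0pq: "P0 = 1/2 * (norm p)\<^sup>2 + 1/2 * (norm q)\<^sup>2" by (simp add: P0_def p_def q_def)
  have key: "1/2 * (norm p)\<^sup>2 + 1/2 * (norm q)\<^sup>2 + \<alpha> * (DR + DL) + \<alpha> * (inner p u + inner q v + inner s v)
      \<le> 1/2 * (norm s)\<^sup>2"
  proof -
    have "\<alpha> * (Rxa + Lha) - \<alpha> * (Rs + Lhs) = \<alpha> * (DR + DL) + \<alpha> * (inner (W xa - hs) u + inner \<eta> ha - Lhs)"
      by (simp add: DR_def DL_def algebra_simps)
    thus ?thesis using Mr unfolding ident P0pq Q0s by linarith
  qed
  define X where "X = (norm (p + \<alpha> *\<^sub>R u))\<^sup>2"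
  define Y where "Y = (norm (q + \<alpha> *\<^sub>R v))\<^sup>2"
  have Xe: "X = (norm p)\<^sup>2 + 2 * \<alpha> * inner p u + \<alpha>\<^sup>2 * (norm u)\<^sup>2"
    unfolding X_def power2_norm_eq_inner by (simp add: inner_add_left inner_add_right inner_commute power2_eq_square algebra_simps)
  have Ye: "Y = (norm q)\<^sup>2 + 2 * \<alpha> * inner q v + \<alpha>\<^sup>2 * (norm v)\<^sup>2"
    unfolding Y_def power2_norm_eq_inner by (simp add: inner_add_left inner_add_right inner_commute power2_eq_square algebra_simps)
  have N2: "N\<^sup>2 = (norm u)\<^sup>2 + (norm v)\<^sup>2" unfolding N_def by simp
  have N0: "N \<ge> 0" unfolding N_def by simp
  have vN: "norm v \<le> N" unfolding N_def by (rule real_le_rsqrt) simp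
  have sd: "norm s \<le> \<delta>" using ydd by (simp add: s_def)
  have s2: "(norm s)\<^sup>2 \<le> \<delta>\<^sup>2" using sd by (intro power_mono) auto
  have sv: "- inner s v \<le> \<delta> * N"
  proof -
    have "- inner s v \<le> norm s * norm v" using norm_cauchy_schwarz[of "-s" v] by simp
    also have "\<dots> \<le> \<delta> * N" using sd vN \<delta>0 by (intro mult_mono) auto
    finally show ?thesis .
  qed
  have main: "1/2 * X + 1/2 * Y + \<alpha> * (DR + DL) \<le> 1/2 * (\<delta> + \<alpha> * N)\<^sup>2"
  proof -
    have "1/2 * X + 1/2 * Y + \<alpha> * (DR + DL) \<le> 1/2 * (norm s)\<^sup>2 - \<alpha> * inner s v + 1/2 * \<alpha>\<^sup>2 * N\<^sup>2"
      using key unfolding Xe Ye N2 by (simp add: algebra_simps)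
    also have "\<dots> \<le> 1/2 * \<delta>\<^sup>2 + \<alpha> * (\<delta> * N) + 1/2 * \<alpha>\<^sup>2 * N\<^sup>2"
      using s2 mult_left_mono[OF sv less_imp_le[OF \<alpha>0]] by simp
    also have "\<dots> = 1/2 * (\<delta> + \<alpha> * N)\<^sup>2" by (simp add: power2_eq_square algebra_simps)
    finally show ?thesis .
  qed
  have X0: "X \<ge> 0" and Y0: "Y \<ge> 0" by (simp_all add: X_def Y_def)
  have dN: "\<delta> + \<alpha> * N = \<delta> * (1 + C * N)" using \<alpha>d by (simp add: algebra_simps)
  have Dsum: "DR + DL \<le> c * \<delta>"
  proof -
    define S where "S = DR + DL"
    define Z where "Z = (1 + C * N)\<^sup>2"
    have h1: "\<alpha> * S \<le> 1/2 * (\<delta> * (1 + C * N))\<^sup>2" using main X0 Y0 dN by (simp add: S_def)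
    have e1: "(\<delta> * (1 + C * N))\<^sup>2 = \<delta> * (\<delta> * Z)" by (simp add: Z_def power_mult_distrib power2_eq_square)
    have e2: "\<alpha> * S = \<delta> * (C * S)" by (simp add: \<alpha>d)
    have "\<delta> * (C * S) \<le> \<delta> * (\<delta> * Z / 2)" using h1 unfolding e1 e2 by simp
    hence "C * S \<le> \<delta> * Z / 2" using \<delta>0 by simp
    hence "S * C \<le> \<delta> * Z / 2" by (simp only: mult.commute)
    hence "S \<le> \<delta> * Z / 2 / C" using C_pos by (simp only: pos_le_divide_eq)
    also have "\<delta> * Z / 2 / C = c * \<delta>" using C_pos by (simp add: c_def Z_def)
    finally show ?thesis by (simp add: S_def)
  qed
  have Yb: "norm (q + \<alpha> *\<^sub>R v) \<le> \<delta> + \<alpha> * N"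
  proof -
    have "\<alpha> * (DR + DL) \<ge> 0" using mult_nonneg_nonneg[OF less_imp_le[OF \<alpha>0] add_nonneg_nonneg[OF DR0 DL0]] .
    hence "Y \<le> (\<delta> + \<alpha> * N)\<^sup>2" using main X0 by linarith
    moreover have "0 \<le> \<delta> + \<alpha> * N" using add_nonneg_nonneg[OF less_imp_le[OF \<delta>0] mult_nonneg_nonneg[OF less_imp_le[OF \<alpha>0] N0]] .
    ultimately show ?thesis unfolding Y_def by (rule power2_le_imp_le)
  qed
  have Ae: "norm (A (ha - hs)) \<le> 2 * \<delta> * (1 + C * N)"
  proof -
    have e1: "A (ha - hs) = A ha - ys" by (simp only: A.diff c11(2))
    have e2: "(q + \<alpha> *\<^sub>R v) + (s - \<alpha> *\<^sub>R v) = A ha - ys" unfolding q_def s_def by (simp add: algebra_simps)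
    have "norm (A (ha - hs)) \<le> norm (q + \<alpha> *\<^sub>R v) + norm (s - \<alpha> *\<^sub>R v)"
      unfolding e1 e2[symmetric] by (rule norm_triangle_ineq)
    moreover have "norm (s - \<alpha> *\<^sub>R v) \<le> norm s + norm (\<alpha> *\<^sub>R v)" by (rule norm_triangle_ineq4)
    moreover have "norm (\<alpha> *\<^sub>R v) = \<alpha> * norm v" using \<alpha>0 by simp
    moreover have "\<alpha> * norm v \<le> \<alpha> * N" using \<alpha>0 vN by (intro mult_left_mono) auto
    moreover have "2 * \<delta> * (1 + C * N) = 2 * (\<delta> * (1 + C * N))" by (simp only: mult.assoc)
    ultimately show ?thesis using Yb sd dN by linarith
  qed
  have breg: "bregman (\<lambda>x. enn2ereal (R x)) (adjoint W u) xa xs \<le> ereal (c * \<delta>)"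
  proof -
    have "inner (adjoint W u) (xa - xs) = inner (W xa - hs) u"
      using adjW[of "xa - xs"] by (simp add: inner_commute W.diff c11)
    hence "bregman (\<lambda>x. enn2ereal (R x)) (adjoint W u) xa xs = ereal DR"
      unfolding bregman_def DR_def using Rs_eq Rxa_eq Rs0 Rxa0 by simp
    thus ?thesis using Dsum DL0 by simp
  qed
  have \<Omega>fin: "finite \<Omega>" unfolding \<Omega>_def by (rule Omega_finite[OF onb a_pos \<kappa>_ge])
  have \<Omega>sub: "\<Omega> \<subseteq> \<Lambda>" unfolding \<Omega>_def Omega_def by auto
  have inj\<Omega>: "inj_on A (span (\<phi> ` \<Omega>))" using c14 unfolding HOmega_def \<Omega>_def \<eta>_def .
  note AI = inv_opnorm_bound[OF onb \<Omega>fin \<Omega>sub A_lin inj\<Omega>]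
  have Ainv0: "Ainv \<ge> 0" unfolding Ainv_def HOmega_def by (rule AI(1))
  have sa: "(\<lambda>l. \<bar>inner (\<phi> l) ha\<bar>) summable_on \<Lambda>" by (rule coeff_abs_summable[OF a_pos \<kappa>_ge sha])
  have ss: "(\<lambda>l. \<bar>inner (\<phi> l) hs\<bar>) summable_on \<Lambda>" by (rule coeff_abs_summable[OF a_pos \<kappa>_ge sub(2)])
  define e where "e = ha - hs"
  have se: "(\<lambda>l. \<bar>inner (\<phi> l) e\<bar>) summable_on \<Lambda>"
  proof (rule summable_on_comparison_test[OF summable_on_add[OF sa ss]])
    fix l show "\<bar>inner (\<phi> l) e\<bar> \<le> \<bar>inner (\<phi> l) ha\<bar> + \<bar>inner (\<phi> l) hs\<bar>"
      unfolding e_def inner_diff_right by (rule abs_triangle_ineq4)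
  qed auto
  define g where "g = (\<Sum>k\<in>\<Omega>. inner (\<phi> k) e *\<^sub>R \<phi> k)"
  define T where "T = infsum (\<lambda>l. \<bar>inner (\<phi> l) e\<bar>) (\<Lambda> - \<Omega>)"
  have rT: "norm (e - g) \<le> T" unfolding g_def T_def by (rule rem_norm[OF onb \<Omega>fin \<Omega>sub se])
  have T0: "T \<ge> 0" unfolding T_def by (rule infsum_nonneg) auto
  have gspan: "g \<in> span (\<phi> ` \<Omega>)" unfolding g_def by (rule finsum_in_span)
  have gA: "norm g \<le> Ainv * norm (A g)" unfolding Ainv_def HOmega_def by (rule AI(2)[OF gspan])
  have n1: "norm (A g) \<le> norm (A e) + norm (A (e - g))"
    using norm_triangle_ineq4[of "A e" "A (e - g)"] by (simp add: A.diff)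
  have n2: "norm (A (e - g)) \<le> onorm A * norm (e - g)" by (rule onorm[OF A_lin])
  have n3: "onorm A * norm (e - g) \<le> onorm A * T" by (rule mult_left_mono[OF rT onorm_pos_le[OF A_lin]])
  have AeE: "norm (A e) \<le> 2 * \<delta> * (1 + C * N)" using Ae by (simp add: e_def)
  have ne: "norm e \<le> norm g + norm (e - g)" using norm_triangle_ineq[of g "e - g"] by simp
  have m1: "Ainv * norm (A g) \<le> Ainv * (2 * \<delta> * (1 + C * N) + onorm A * T)"
    by (rule mult_left_mono[OF _ Ainv0]) (use n1 n2 n3 AeE in linarith)
  have B: "norm e \<le> 2 * Ainv * (1 + C * N) * \<delta> + (1 + Ainv * onorm A) * T"
  proof -
    have "norm e \<le> Ainv * (2 * \<delta> * (1 + C * N) + onorm A * T) + T" using ne gA m1 rT by linarith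
    also have "\<dots> = 2 * Ainv * (1 + C * N) * \<delta> + (1 + Ainv * onorm A) * T" by (simp add: algebra_simps)
    finally show ?thesis .
  qed
  have nb: "norm (ha - hs) \<le> d * \<delta>"
  proof (cases "\<Lambda> = \<Omega>")
    case True
    hence "T = 0" by (simp add: T_def)
    thus ?thesis using B True by (simp add: d_def e_def)
  next
    case False
    hence ne\<Omega>: "\<Lambda> - Omega \<Lambda> \<phi> \<kappa> \<eta> \<noteq> {}" using \<Omega>sub by (auto simp: \<Omega>_def)
    define m where "m = mgap \<Lambda> \<phi> \<kappa> \<eta>"
    have m0: "m > 0" unfolding m_def by (rule mgap_pos[OF onb a_pos \<kappa>_ge sub(4) ne\<Omega>])
    note gap = l1_gap[OF onb a_pos \<kappa>_ge sub(4) sha sub(2) sub(3), of \<Omega>]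
    have se': "(\<lambda>l. \<bar>inner (\<phi> l) e\<bar>) summable_on (\<Lambda> - \<Omega>)" by (rule summable_on_subset[OF se]) auto
    have "m * T = infsum (\<lambda>l. m * \<bar>inner (\<phi> l) e\<bar>) (\<Lambda> - \<Omega>)"
      unfolding T_def by (rule infsum_cmult_right[symmetric]) (use se' in auto)
    also have "\<dots> \<le> infsum (\<lambda>l. (\<kappa> l - \<bar>inner (\<phi> l) \<eta>\<bar>) * \<bar>inner (\<phi> l) (ha - hs)\<bar>) (\<Lambda> - \<Omega>)"
    proof (rule infsum_mono)
      show "(\<lambda>l. m * \<bar>inner (\<phi> l) e\<bar>) summable_on (\<Lambda> - \<Omega>)" using se' by (rule summable_on_cmult_right)
      show "(\<lambda>l. (\<kappa> l - \<bar>inner (\<phi> l) \<eta>\<bar>) * \<bar>inner (\<phi> l) (ha - hs)\<bar>) summable_on (\<Lambda> - \<Omega>)" by (rule gap(1))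
      fix l assume l: "l \<in> \<Lambda> - \<Omega>"
      have "m \<le> \<kappa> l - \<bar>inner (\<phi> l) \<eta>\<bar>" unfolding m_def by (rule mgap_le[OF sub(4)]) (use l in \<open>simp add: \<Omega>_def\<close>)
      thus "m * \<bar>inner (\<phi> l) e\<bar> \<le> (\<kappa> l - \<bar>inner (\<phi> l) \<eta>\<bar>) * \<bar>inner (\<phi> l) (ha - hs)\<bar>"
        unfolding e_def by (rule mult_right_mono) simp
    qed
    also have "\<dots> \<le> Lha - inner \<eta> ha" unfolding Lha_def by (rule gap(2))
    finally have "m * T \<le> DL" by (simp add: DL_def)
    hence "m * T \<le> c * \<delta>" using Dsum DR0 by linarith
    hence Tle: "T \<le> c * \<delta> / m" using m0 by (simp add: pos_le_divide_eq mult.commute)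
    have k: "1 + Ainv * onorm A \<ge> 0" using Ainv0 onorm_pos_le[OF A_lin] by simp
    have "(1 + Ainv * onorm A) * T \<le> (1 + Ainv * onorm A) * (c * \<delta> / m)"
      by (rule mult_left_mono[OF Tle k])
    also have "\<dots> = (1 + Ainv * onorm A) / m * c * \<delta>" by simp
    finally have "(1 + Ainv * onorm A) * T \<le> (1 + Ainv * onorm A) / m * c * \<delta>" .
    moreover have "d * \<delta> = 2 * Ainv * (1 + C * N) * \<delta> + (1 + Ainv * onorm A) / m * c * \<delta>"
      using False by (simp add: d_def m_def \<Omega>_def algebra_simps)
    ultimately show ?thesis using B by (simp add: e_def)
  qed
  have final: "bregman (\<lambda>x. enn2ereal (R x)) (adjoint W u) xa xs \<le> ereal (c * \<delta>)
         \<and> norm (ha - hs) \<le> d * \<delta>" using breg nb by blast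
  show "let \<eta> = adjoint A v - u;
          \<Omega> = Omega \<Lambda> \<phi> \<kappa> \<eta>;
          N = sqrt ((norm u)\<^sup>2 + (norm v)\<^sup>2);
          c = (1 + C * N)\<^sup>2 / (2 * C);
          Ainv = inv_opnorm A (HOmega \<phi> \<Omega>);
          d = 2 * Ainv * (1 + C * N)
              + (if \<Lambda> = \<Omega> then 0 else (1 + Ainv * onorm A) / mgap \<Lambda> \<phi> \<kappa> \<eta> * c)
      in bregman (\<lambda>x. enn2ereal (R x)) (adjoint W u) xa xs \<le> ereal (c * \<delta>)
         \<and> norm (ha - hs) \<le> d * \<delta>"
    using final unfolding Let_def d_def c_def Ainv_def \<Omega>_def N_def \<eta>_def .
qed

end
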